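(* Let $S$ be the geodesic spray of a Finsler function on an $n$-dimensional manifold $M$, let $\mathcal P$ be a smooth function on $\mathcal{T}M$, positively $1$-homogeneous in $y$, which is holonomy invariant with respect to $S$, and let $\lambda\in\mathbb{R}$. Let $\widetilde S=S-2\lambda\mathcal P\,\mathcal C$, and denote by $h,v,\Phi$ (resp. $\widetilde h,\widetilde v,\widetilde\Phi$) the horizontal projector, vertical projector and Jacobi endomorphism of $S$ (resp. of $\widetilde S$). Then $$\widetilde h=h-\lambda\big(\mathcal P J+d_J\mathcal P\otimes\mathcal C\big),\qquad \widetilde v=v+\lambda\big(\mathcal P J+d_J\mathcal P\otimes\mathcal C\big),$$ $$\widetilde\Phi=\Phi+\lambda^2\big(\mathcal P^2J-\mathcal P\,d_J\mathcal P\otimes\mathcal C\big).$$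
   Context: $TM$ has induced coordinates $(x^i,y^i)$, $\mathcal{T}M=TM\setminus\{0\}$, $\mathcal C=y^i\frac{\partial}{\partial y^i}$, $J=\frac{\partial}{\partial y^i}\otimes dx^i$. A spray is a vector field on $\mathcal TM$ with $JS=\mathcal C$, $[\mathcal C,S]=S$; locally $S=y^i\frac{\partial}{\partial x^i}-2G^i\frac{\partial}{\partial y^i}$. With $G^j_i=\partial G^j/\partial y^i$, $\delta_i=\frac{\partial}{\partial x^i}-G^j_i\frac{\partial}{\partial y^j}$, $\delta y^i=dy^i+G^i_jdx^j$, the horizontal and vertical projectors are $h=\delta_i\otimes dx^i$, $v=\frac{\partial}{\partial y^i}\otimes\delta y^i$. The Jacobi endomorphism is $\Phi=R^i_j\,dx^j\otimes\frac{\partial}{\partial y^i}$ with $R^i_j=2\frac{\partial G^i}{\partial x^j}-S(G^i_j)-G^i_kG^k_j$. For a function $f$ and vector $1$-form $L$, $d_Lf=df\circ L$, so $(d_J\mathcal P)(X)=(JX)(\mathcal P)$; for a $1$-form $\omega$ and vector field $Y$, $\omega\otimes Y$ is the vector $1$-form $X\mapsto\omega(X)Y$. $\mathcal P$ is holonomy invariant if $d_h\mathcal P=0$. A Finsler function $F$ is smooth positive on $\mathcal TM$, positively $1$-homogeneous, with nondegenerate $g_{ij}=\frac12\partial^2F^2/\partial y^i\partial y^j$; its geodesic spray is the spray $S$ with $i_Sdd_JE=-dE$, $E=\frac12F^2$. *)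

theory Defs
  imports "HOL-Analysis.Analysis"
begin

text \<open>A chart domain is an open set U of real^'n;
  points of TU are pairs (x,y); tangent vectors to TU at a point are pairs
  (xi,eta) = xi^i d/dx^i + eta^i d/dy^i.\<close>

type_synonym 'n tpt = "(real^'n) \<times> (real^'n)"

definition slit :: "(real^('n::finite)) set \<Rightarrow> ('n::finite) tpt set" where
  "slit U = {p. fst p \<in> U \<and> snd p \<noteq> 0}"

definition dd :: "('a::real_normed_vector \<Rightarrow> 'b::real_normed_vector) \<Rightarrow> 'a \<Rightarrow> 'a \<Rightarrow> 'b" where
  "dd f p v = frechet_derivative f (at p) v"

fun Ck_on :: "nat \<Rightarrow> 'a set \<Rightarrow> ('a::real_normed_vector \<Rightarrow> 'b::real_normed_vector) \<Rightarrow> bool" where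
  "Ck_on 0 U f = continuous_on U f"
| "Ck_on (Suc k) U f = (f differentiable_on U \<and> (\<forall>v. Ck_on k U (\<lambda>p. dd f p v)))"

definition smooth_on :: "'a set \<Rightarrow> ('a::real_normed_vector \<Rightarrow> 'b::real_normed_vector) \<Rightarrow> bool" where
  "smooth_on U f = (\<forall>k. Ck_on k U f)"

definition Jv :: "('n::finite) tpt \<Rightarrow> ('n::finite) tpt" where
  "Jv X = (0, fst X)"

definition liouville :: "('n::finite) tpt \<Rightarrow> ('n::finite) tpt" where
  "liouville p = (0, snd p)"

definition lie_bracket :: "(('n::finite) tpt \<Rightarrow> ('n::finite) tpt) \<Rightarrow> (('n::finite) tpt \<Rightarrow> ('n::finite) tpt) \<Rightarrow> ('n::finite) tpt \<Rightarrow> ('n::finite) tpt" where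
  "lie_bracket X Y p = dd Y p (X p) - dd X p (Y p)"

definition is_spray :: "(real^('n::finite)) set \<Rightarrow> (('n::finite) tpt \<Rightarrow> ('n::finite) tpt) \<Rightarrow> bool" where
  "is_spray U S \<longleftrightarrow> smooth_on (slit U) S \<and>
     (\<forall>p\<in>slit U. Jv (S p) = liouville p \<and> lie_bracket liouville S p = S p)"

text \<open>Spray coefficients G^i (S = y^i d/dx^i - 2 G^i d/dy^i), and G^i_j xi^j.\<close>
definition sprayG :: "(('n::finite) tpt \<Rightarrow> ('n::finite) tpt) \<Rightarrow> ('n::finite) tpt \<Rightarrow> real^'n" where
  "sprayG S p = - (1/2) *\<^sub>R snd (S p)"

definition GJ :: "(('n::finite) tpt \<Rightarrow> ('n::finite) tpt) \<Rightarrow> ('n::finite) tpt \<Rightarrow> real^'n \<Rightarrow> real^'n" where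
  "GJ S p xi = dd (sprayG S) p (0, xi)"

text \<open>Horizontal projector h = delta_i (x) dx^i, vertical projector v = d/dy^i (x) delta y^i.\<close>
definition hproj :: "(('n::finite) tpt \<Rightarrow> ('n::finite) tpt) \<Rightarrow> ('n::finite) tpt \<Rightarrow> ('n::finite) tpt \<Rightarrow> ('n::finite) tpt" where
  "hproj S p X = (fst X, - GJ S p (fst X))"

definition vproj :: "(('n::finite) tpt \<Rightarrow> ('n::finite) tpt) \<Rightarrow> ('n::finite) tpt \<Rightarrow> ('n::finite) tpt \<Rightarrow> ('n::finite) tpt" where
  "vproj S p X = (0, snd X + GJ S p (fst X))"

text \<open>Jacobi endomorphism: R^i_j = 2 dG^i/dx^j - S(G^i_j) - G^i_k G^k_j,
  Phi = R^i_j dx^j (x) d/dy^i.\<close>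
definition jacobiR :: "(('n::finite) tpt \<Rightarrow> ('n::finite) tpt) \<Rightarrow> ('n::finite) tpt \<Rightarrow> real^'n \<Rightarrow> real^'n" where
  "jacobiR S p xi = 2 *\<^sub>R dd (sprayG S) p (xi, 0) - dd (\<lambda>q. GJ S q xi) p (S p) - GJ S p (GJ S p xi)"

definition jacobi :: "(('n::finite) tpt \<Rightarrow> ('n::finite) tpt) \<Rightarrow> ('n::finite) tpt \<Rightarrow> ('n::finite) tpt \<Rightarrow> ('n::finite) tpt" where
  "jacobi S p X = (0, jacobiR S p (fst X))"

definition dJ :: "(('n::finite) tpt \<Rightarrow> real) \<Rightarrow> ('n::finite) tpt \<Rightarrow> ('n::finite) tpt \<Rightarrow> real" where
  "dJ f p X = dd f p (Jv X)"

definition dh :: "(('n::finite) tpt \<Rightarrow> ('n::finite) tpt) \<Rightarrow> (('n::finite) tpt \<Rightarrow> real) \<Rightarrow> ('n::finite) tpt \<Rightarrow> ('n::finite) tpt \<Rightarrow> real" where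
  "dh S f p X = dd f p (hproj S p X)"

text \<open>Exterior derivative of a 1-form alpha (evaluated on constant coordinate vectors,
  which commute): d alpha (X,Y) = X(alpha Y) - Y(alpha X).\<close>
definition ext_d :: "(('n::finite) tpt \<Rightarrow> ('n::finite) tpt \<Rightarrow> real) \<Rightarrow> ('n::finite) tpt \<Rightarrow> ('n::finite) tpt \<Rightarrow> ('n::finite) tpt \<Rightarrow> real" where
  "ext_d alpha p X Y = dd (\<lambda>q. alpha q Y) p X - dd (\<lambda>q. alpha q X) p Y"

definition pos_hom1 :: "(real^('n::finite)) set \<Rightarrow> (('n::finite) tpt \<Rightarrow> real) \<Rightarrow> bool" where
  "pos_hom1 U f \<longleftrightarrow> (\<forall>x y t. x \<in> U \<longrightarrow> y \<noteq> 0 \<longrightarrow> t > 0 \<longrightarrow> f (x, t *\<^sub>R y) = t * f (x, y))"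

definition vhess :: "(('n::finite) tpt \<Rightarrow> real) \<Rightarrow> ('n::finite) tpt \<Rightarrow> real^'n \<Rightarrow> real^'n \<Rightarrow> real" where
  "vhess f p u w = dd (\<lambda>q. dd f q (0, w)) p (0, u)"

definition finsler_g :: "(('n::finite) tpt \<Rightarrow> real) \<Rightarrow> ('n::finite) tpt \<Rightarrow> real^'n \<Rightarrow> real^'n \<Rightarrow> real" where
  "finsler_g F p u w = (1/2) * vhess (\<lambda>q. (F q)^2) p u w"

definition is_finsler :: "(real^('n::finite)) set \<Rightarrow> (('n::finite) tpt \<Rightarrow> real) \<Rightarrow> bool" where
  "is_finsler U F \<longleftrightarrow> smooth_on (slit U) F \<and> (\<forall>p\<in>slit U. F p > 0) \<and> pos_hom1 U F \<and>
     (\<forall>p\<in>slit U. \<forall>u. (\<forall>w. finsler_g F p u w = 0) \<longrightarrow> u = 0)"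

definition geodesic_spray :: "(real^('n::finite)) set \<Rightarrow> (('n::finite) tpt \<Rightarrow> real) \<Rightarrow> (('n::finite) tpt \<Rightarrow> ('n::finite) tpt) \<Rightarrow> bool" where
  "geodesic_spray U F S \<longleftrightarrow> is_spray U S \<and>
     (\<forall>p\<in>slit U. \<forall>Y. ext_d (dJ (\<lambda>q. (1/2) * (F q)^2)) p (S p) Y = - dd (\<lambda>q. (1/2) * (F q)^2) p Y)"

definition holonomy_invariant :: "(real^('n::finite)) set \<Rightarrow> (('n::finite) tpt \<Rightarrow> ('n::finite) tpt) \<Rightarrow> (('n::finite) tpt \<Rightarrow> real) \<Rightarrow> bool" where
  "holonomy_invariant U S P \<longleftrightarrow> (\<forall>p\<in>slit U. \<forall>X. dh S P p X = 0)"

end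

theory Submission
  imports Defs
begin


lemma dd_hd: "f differentiable at p \<Longrightarrow> (f has_derivative dd f p) (at p)"
  unfolding dd_def using frechet_derivative_works by (metis (no_types) eta_contract_eq)

lemma dd_eq: "(f has_derivative f') (at p) \<Longrightarrow> dd f p v = f' v"
  unfolding dd_def using frechet_derivative_at by metis

lemma dd_linear: "f differentiable at p \<Longrightarrow> linear (dd f p)"
  using dd_hd has_derivative_linear by blast

lemma dd_add: "f differentiable at p \<Longrightarrow> dd f p (u + v) = dd f p u + dd f p v"
  using dd_linear linear_add by blast
lemma dd_scale: "f differentiable at p \<Longrightarrow> dd f p (c *\<^sub>R u) = c *\<^sub>R dd f p u"
  using dd_linear linear_scale by blast
lemma dd_diff: "f differentiable at p \<Longrightarrow> dd f p (u - v) = dd f p u - dd f p v"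
  using dd_linear linear_diff by blast
lemma dd_zero: "f differentiable at p \<Longrightarrow> dd f p 0 = 0"
  using dd_linear linear_0 by blast

lemma dd_cong:
  assumes "open A" "p \<in> A" "\<And>q. q \<in> A \<Longrightarrow> f q = g q"
  shows "dd f p v = dd g p v"
proof -
  have "\<And>f'. (f has_derivative f') (at p) \<longleftrightarrow> (g has_derivative f') (at p)"
    using has_derivative_transform_within_open[OF _ assms(1,2)] assms(3) by metis
  then show ?thesis unfolding dd_def frechet_derivative_def by simp
qed

lemma diff_cong:
  assumes "open A" "p \<in> A" "\<And>q. q \<in> A \<Longrightarrow> f q = g q" "f differentiable at p"
  shows "g differentiable at p"
  using assms has_derivative_transform_within_open unfolding differentiable_def by metis

lemma Ck_cong:
  assumes "open A" "\<And>q. q \<in> A \<Longrightarrow> f q = g q" "Ck_on k A f"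
  shows "Ck_on k A g"
  using assms
proof (induction k arbitrary: f g)
  case 0 then show ?case using continuous_on_cong by (metis Ck_on.simps(1))
next
  case (Suc k)
  have "g differentiable_on A"
    using Suc.prems diff_cong differentiable_on_eq_differentiable_at by (metis Ck_on.simps(2))
  moreover have "Ck_on k A (\<lambda>p. dd g p v)" for v
    using Suc.IH[of "\<lambda>p. dd f p v" "\<lambda>p. dd g p v"] Suc.prems dd_cong by (metis Ck_on.simps(2))
  ultimately show ?case by simp
qed

lemma Ck_lin:
  assumes "open A" "bounded_linear L" "Ck_on k A f"
  shows "Ck_on k A (\<lambda>q. L (f q))"
  using assms(3)
proof (induction k arbitrary: f)
  case 0 then show ?case
    using assms(2) continuous_on_compose2[of UNIV L A f] linear_continuous_on by (simp add: linear_continuous_on)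
next
  case (Suc k)
  then have fd: "f differentiable_on A" and ck: "\<And>v. Ck_on k A (\<lambda>p. dd f p v)" by auto
  have fda: "\<And>q. q \<in> A \<Longrightarrow> f differentiable at q"
    using fd assms(1) differentiable_on_eq_differentiable_at by blast
  have hd: "\<And>q. q \<in> A \<Longrightarrow> ((\<lambda>q. L (f q)) has_derivative (\<lambda>v. L (dd f q v))) (at q)"
    using bounded_linear.has_derivative[OF assms(2) dd_hd[OF fda]] by blast
  have "(\<lambda>q. L (f q)) differentiable_on A"
    using hd assms(1) differentiable_on_eq_differentiable_at unfolding differentiable_def by blast
  moreover have "Ck_on k A (\<lambda>p. dd (\<lambda>q. L (f q)) p v)" for v
    using Ck_cong[OF assms(1) _ Suc.IH[OF ck[of v]], of "\<lambda>p. dd (\<lambda>q. L (f q)) p v"] hd dd_eq by metis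
  ultimately show ?case by simp
qed

lemma smooth_lin: "open A \<Longrightarrow> bounded_linear L \<Longrightarrow> smooth_on A f \<Longrightarrow> smooth_on A (\<lambda>q. L (f q))"
  unfolding smooth_on_def using Ck_lin by blast

lemma smooth_dd: "smooth_on A f \<Longrightarrow> smooth_on A (\<lambda>q. dd f q v)"
  unfolding smooth_on_def by (metis Ck_on.simps(2))

lemma smooth_diff: "open A \<Longrightarrow> smooth_on A f \<Longrightarrow> q \<in> A \<Longrightarrow> f differentiable at q"
  unfolding smooth_on_def by (metis Ck_on.simps(2) One_nat_def differentiable_on_eq_differentiable_at)

lemma smooth_cont: "smooth_on A f \<Longrightarrow> continuous_on A f"
  unfolding smooth_on_def by (metis Ck_on.simps(1))



lemma line_deriv:
  fixes g :: "'a::real_normed_vector \<Rightarrow> real"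
  assumes "g differentiable at (a + t *\<^sub>R u)"
  shows "((\<lambda>s. g (a + s *\<^sub>R u)) has_real_derivative dd g (a + t *\<^sub>R u) u) (at t)"
proof -
  have l: "((\<lambda>s. a + s *\<^sub>R u) has_derivative (\<lambda>h. h *\<^sub>R u)) (at t)"
    by (auto intro!: derivative_eq_intros)
  have "((\<lambda>s. g (a + s *\<^sub>R u)) has_derivative (\<lambda>h. dd g (a + t *\<^sub>R u) (h *\<^sub>R u))) (at t)"
    using diff_chain_at[OF l dd_hd[OF assms]] by (simp add: o_def)
  moreover have "(\<lambda>h. dd g (a + t *\<^sub>R u) (h *\<^sub>R u)) = (\<lambda>h. h * dd g (a + t *\<^sub>R u) u)"
    using dd_scale[OF assms] by auto
  moreover have "(\<lambda>h. h * dd g (a + t *\<^sub>R u) u) = (*) (dd g (a + t *\<^sub>R u) u)"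
    by (auto simp: mult.commute)
  ultimately show ?thesis unfolding has_field_derivative_def by metis
qed

lemma delta_rep:
  fixes f :: "'a::real_normed_vector \<Rightarrow> real"
  assumes A: "open A" and sm: "smooth_on A f" and s: "s > 0"
    and inA: "\<And>a b. 0 \<le> a \<Longrightarrow> a \<le> s \<Longrightarrow> 0 \<le> b \<Longrightarrow> b \<le> s \<Longrightarrow> p + a *\<^sub>R v + b *\<^sub>R w \<in> A"
  shows "\<exists>th rh. 0 < th \<and> th < s \<and> 0 < rh \<and> rh < s \<and>
     f (p + s *\<^sub>R v + s *\<^sub>R w) - f (p + s *\<^sub>R v) - f (p + s *\<^sub>R w) + f p
       = s * (s * dd (\<lambda>q. dd f q v) (p + th *\<^sub>R v + rh *\<^sub>R w) w)"
proof -
  define g where "g t = f ((p + s *\<^sub>R w) + t *\<^sub>R v) - f (p + t *\<^sub>R v)" for t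
  have "DERIV g t :> dd f ((p + s *\<^sub>R w) + t *\<^sub>R v) v - dd f (p + t *\<^sub>R v) v"
    if "0 \<le> t" "t \<le> s" for t
  proof -
    have i1: "(p + s *\<^sub>R w) + t *\<^sub>R v \<in> A" using inA[of t s] that s by (simp add: algebra_simps)
    have i2: "p + t *\<^sub>R v \<in> A" using inA[of t 0] that s by simp
    show ?thesis unfolding g_def
      by (intro DERIV_diff line_deriv smooth_diff[OF A sm] i1 i2)
  qed
  from MVT2[OF s, of g, OF this]
  obtain th where th: "0 < th" "th < s"
    and e1: "g s - g 0 = (s - 0) * (dd f ((p + s *\<^sub>R w) + th *\<^sub>R v) v - dd f (p + th *\<^sub>R v) v)"
    by auto
  define h where "h r = dd f ((p + th *\<^sub>R v) + r *\<^sub>R w) v" for r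
  have sm1: "smooth_on A (\<lambda>q. dd f q v)" using smooth_dd[OF sm] .
  have "DERIV h r :> dd (\<lambda>q. dd f q v) ((p + th *\<^sub>R v) + r *\<^sub>R w) w"
    if "0 \<le> r" "r \<le> s" for r
  proof -
    have "(p + th *\<^sub>R v) + r *\<^sub>R w \<in> A" using inA[of th r] that th by simp
    then show ?thesis unfolding h_def
      by (intro line_deriv smooth_diff[OF A sm1])
  qed
  from MVT2[OF s, of h, OF this]
  obtain rh where rh: "0 < rh" "rh < s"
    and e2: "h s - h 0 = (s - 0) * dd (\<lambda>q. dd f q v) ((p + th *\<^sub>R v) + rh *\<^sub>R w) w"
    by auto
  have "h s - h 0 = dd f ((p + s *\<^sub>R w) + th *\<^sub>R v) v - dd f (p + th *\<^sub>R v) v"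
    unfolding h_def by (simp add: algebra_simps)
  moreover have "g s - g 0 = f (p + s *\<^sub>R v + s *\<^sub>R w) - f (p + s *\<^sub>R v) - f (p + s *\<^sub>R w) + f p"
    unfolding g_def by (simp add: algebra_simps)
  ultimately show ?thesis using e1 e2 th rh by (intro exI[of _ th] exI[of _ rh]) auto
qed

lemma sym_real:
  fixes f :: "'a::real_normed_vector \<Rightarrow> real"
  assumes A: "open A" and pA: "p \<in> A" and sm: "smooth_on A f"
  shows "dd (\<lambda>q. dd f q v) p w = dd (\<lambda>q. dd f q w) p v"
proof (rule ccontr)
  define D1 where "D1 = (\<lambda>q. dd (\<lambda>q. dd f q v) q w)"
  define D2 where "D2 = (\<lambda>q. dd (\<lambda>q. dd f q w) q v)"
  assume ne: "dd (\<lambda>q. dd f q v) p w \<noteq> dd (\<lambda>q. dd f q w) p v"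
  define e where "e = \<bar>D1 p - D2 p\<bar> / 3"
  have e: "e > 0" using ne unfolding e_def D1_def D2_def by simp
  have c1: "isCont D1 p" unfolding D1_def
    using smooth_cont[OF smooth_dd[OF smooth_dd[OF sm]]] continuous_on_eq_continuous_at[OF A] pA by blast
  have c2: "isCont D2 p" unfolding D2_def
    using smooth_cont[OF smooth_dd[OF smooth_dd[OF sm]]] continuous_on_eq_continuous_at[OF A] pA by blast
  obtain d1 where d1: "d1 > 0" "\<And>q. dist q p < d1 \<Longrightarrow> dist (D1 q) (D1 p) < e"
    using c1 e unfolding continuous_at_eps_delta by blast
  obtain d2 where d2: "d2 > 0" "\<And>q. dist q p < d2 \<Longrightarrow> dist (D2 q) (D2 p) < e"
    using c2 e unfolding continuous_at_eps_delta by blast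
  obtain d0 where d0: "d0 > 0" "ball p d0 \<subseteq> A" using A pA open_contains_ball by blast
  define d where "d = min d0 (min d1 d2)"
  have d: "d > 0" using d0 d1 d2 unfolding d_def by simp
  define s where "s = d / (2 * (norm v + norm w + 1))"
  have "(2::real) * (norm v + norm w + 1) > 0" by (smt (verit) norm_ge_zero)
  then have s: "s > 0" using d unfolding s_def by simp
  have small: "dist (p + a *\<^sub>R v' + b *\<^sub>R w') p < d" if "0 \<le> a" "a \<le> s" "0 \<le> b" "b \<le> s" "v' \<in> {v,w}" "w' \<in> {v,w}" for a b v' w'
  proof -
    have nv: "norm v' \<le> norm v + norm w" "norm w' \<le> norm v + norm w" using that(5,6) by auto
    have "dist (p + a *\<^sub>R v' + b *\<^sub>R w') p = norm (a *\<^sub>R v' + b *\<^sub>R w')" by (simp add: dist_norm)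
    also have "\<dots> \<le> a * norm v' + b * norm w'" using that
      by (metis norm_triangle_ineq norm_scaleR abs_of_nonneg)
    also have "\<dots> \<le> s * (norm v + norm w) + s * (norm v + norm w)" using that nv
      by (intro add_mono mult_mono) auto
    also have "\<dots> < d"
    proof -
      have "s * (2 * (norm v + norm w + 1)) = d" unfolding s_def
        using \<open>(2::real) * (norm v + norm w + 1) > 0\<close> by simp
      then show ?thesis using d s by (simp add: algebra_simps)
    qed
    finally show ?thesis .
  qed
  have inA: "p + a *\<^sub>R v' + b *\<^sub>R w' \<in> A" if "0 \<le> a" "a \<le> s" "0 \<le> b" "b \<le> s" "v' \<in> {v,w}" "w' \<in> {v,w}" for a b v' w'
  proof -
    have "dist (p + a *\<^sub>R v' + b *\<^sub>R w') p < d0" using small[OF that] d_def by auto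
    then show ?thesis using d0(2) by (auto simp: dist_commute)
  qed
  obtain th rh where th: "0 < th" "th < s" "0 < rh" "rh < s"
    and e1: "f (p + s *\<^sub>R v + s *\<^sub>R w) - f (p + s *\<^sub>R v) - f (p + s *\<^sub>R w) + f p
       = s * (s * D1 (p + th *\<^sub>R v + rh *\<^sub>R w))"
    using delta_rep[OF A sm s, of p v w] inA unfolding D1_def by auto
  obtain th' rh' where th': "0 < th'" "th' < s" "0 < rh'" "rh' < s"
    and e2: "f (p + s *\<^sub>R w + s *\<^sub>R v) - f (p + s *\<^sub>R w) - f (p + s *\<^sub>R v) + f p
       = s * (s * D2 (p + th' *\<^sub>R w + rh' *\<^sub>R v))"
    using delta_rep[OF A sm s, of p w v] inA unfolding D2_def by auto
  have "f (p + s *\<^sub>R w + s *\<^sub>R v) = f (p + s *\<^sub>R v + s *\<^sub>R w)" by (simp add: add_ac)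
  then have "s * (s * D1 (p + th *\<^sub>R v + rh *\<^sub>R w)) = s * (s * D2 (p + th' *\<^sub>R w + rh' *\<^sub>R v))"
    using e1 e2 by (simp add: algebra_simps)
  then have eq: "D1 (p + th *\<^sub>R v + rh *\<^sub>R w) = D2 (p + th' *\<^sub>R w + rh' *\<^sub>R v)" using s by simp
  have "dist (D1 (p + th *\<^sub>R v + rh *\<^sub>R w)) (D1 p) < e"
    using d1(2) small[of th rh v w] th unfolding d_def by auto
  moreover have "dist (D2 (p + th' *\<^sub>R w + rh' *\<^sub>R v)) (D2 p) < e"
    using d2(2) small[of th' rh' w v] th' unfolding d_def by auto
  ultimately have "\<bar>D1 p - D2 p\<bar> < 2 * e" using eq by (simp add: dist_real_def)
  then show False using e unfolding e_def by simp
qed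



lemma dd_inner:
  assumes "g differentiable at p"
  shows "dd (\<lambda>q. g q \<bullet> b) p u = dd g p u \<bullet> b"
  using bounded_linear.has_derivative[OF bounded_linear_inner_left dd_hd[OF assms]] dd_eq by metis

lemma sym_vec:
  fixes f :: "'a::real_normed_vector \<Rightarrow> 'b::euclidean_space"
  assumes A: "open A" and pA: "p \<in> A" and sm: "smooth_on A f"
  shows "dd (\<lambda>q. dd f q v) p w = dd (\<lambda>q. dd f q w) p v"
proof (rule euclidean_eqI)
  fix b :: 'b assume "b \<in> Basis"
  define fb where "fb = (\<lambda>q. f q \<bullet> b)"
  have smb: "smooth_on A fb" unfolding fb_def by (rule smooth_lin[OF A bounded_linear_inner_left sm])
  have *: "dd (\<lambda>q. dd fb q x) p y = dd (\<lambda>q. dd f q x) p y \<bullet> b" for x y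
  proof -
    have "dd (\<lambda>q. dd fb q x) p y = dd (\<lambda>q. dd f q x \<bullet> b) p y"
      unfolding fb_def by (rule dd_cong[OF A pA]) (simp add: dd_inner smooth_diff[OF A sm])
    also have "\<dots> = dd (\<lambda>q. dd f q x) p y \<bullet> b"
      by (rule dd_inner, rule smooth_diff[OF A smooth_dd[OF sm] pA])
    finally show ?thesis .
  qed
  have "dd (\<lambda>q. dd f q v) p w \<bullet> b = dd (\<lambda>q. dd fb q v) p w" by (rule *[symmetric])
  also have "\<dots> = dd (\<lambda>q. dd fb q w) p v" by (rule sym_real[OF A pA smb])
  also have "\<dots> = dd (\<lambda>q. dd f q w) p v \<bullet> b" by (rule *)
  finally show "dd (\<lambda>q. dd f q v) p w \<bullet> b = dd (\<lambda>q. dd f q w) p v \<bullet> b" .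
qed

lemma pair_expand: "((0::real^'n), w) = (\<Sum>i\<in>UNIV. (w $ i) *\<^sub>R ((0::real^'n), axis i (1::real)))"
proof -
  have e: "(\<Sum>i\<in>UNIV. (w $ i) *\<^sub>R axis i (1::real)) = w"
    using basis_expansion[of w] by (simp add: scalar_mult_eq_scaleR)
  have "fst (\<Sum>i\<in>UNIV. (w $ i) *\<^sub>R ((0::real^'n), axis i (1::real))) = 0"
    by (simp add: fst_sum)
  moreover have "snd (\<Sum>i\<in>UNIV. (w $ i) *\<^sub>R ((0::real^'n), axis i (1::real))) = w"
    by (simp add: snd_sum e)
  ultimately show ?thesis by (metis prod.collapse)
qed

lemma dd_expand:
  fixes F :: "('n::finite) tpt \<Rightarrow> 'b::real_normed_vector"
  assumes "F differentiable at q"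
  shows "dd F q (0, w) = (\<Sum>i\<in>UNIV. (w $ i) *\<^sub>R dd F q (0, axis i 1))"
proof -
  have L: "linear (dd F q)" by (rule dd_linear[OF assms])
  have "dd F q (0, w) = dd F q (\<Sum>i\<in>UNIV. (w $ i) *\<^sub>R ((0::real^'n), axis i (1::real)))"
    by (rule arg_cong[OF pair_expand[of w]])
  also have "dd F q (\<Sum>i\<in>UNIV. (w $ i) *\<^sub>R ((0::real^'n), axis i (1::real)))
      = (\<Sum>i\<in>UNIV. dd F q ((w $ i) *\<^sub>R ((0::real^'n), axis i (1::real))))"
    by (rule linear_sum[OF L])
  also have "\<dots> = (\<Sum>i\<in>UNIV. (w $ i) *\<^sub>R dd F q (0, axis i 1))"
    by (simp only: linear_scale[OF L])
  finally show ?thesis .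
qed

lemma pr_sum:
  fixes F :: "('n::finite) tpt \<Rightarrow> 'b::real_normed_vector" and W :: "'n tpt \<Rightarrow> real^'n"
  assumes A: "open A" and pA: "p \<in> A" and Fd: "\<And>q. q \<in> A \<Longrightarrow> F differentiable at q"
    and ad: "\<And>i. (\<lambda>q. dd F q (0, axis i 1)) differentiable at p"
    and Wd: "W differentiable at p"
  shows "((\<lambda>q. dd F q (0, W q)) has_derivative
     (\<lambda>u. \<Sum>i\<in>UNIV. (dd W p u $ i) *\<^sub>R dd F p (0, axis i 1) + (W p $ i) *\<^sub>R dd (\<lambda>q. dd F q (0, axis i 1)) p u)) (at p)"
proof -
  have "((\<lambda>q. \<Sum>i\<in>UNIV. (W q $ i) *\<^sub>R dd F q (0, axis i 1)) has_derivative
     (\<lambda>u. \<Sum>i\<in>UNIV. (W p $ i) *\<^sub>R dd (\<lambda>q. dd F q (0, axis i 1)) p u + (dd W p u $ i) *\<^sub>R dd F p (0, axis i 1))) (at p)"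
    apply (rule has_derivative_sum)
    apply (rule has_derivative_scaleR)
     apply (rule bounded_linear.has_derivative[OF bounded_linear_vec_nth dd_hd[OF Wd]])
    apply (rule dd_hd[OF ad])
    done
  then have "((\<lambda>q. dd F q (0, W q)) has_derivative
     (\<lambda>u. \<Sum>i\<in>UNIV. (W p $ i) *\<^sub>R dd (\<lambda>q. dd F q (0, axis i 1)) p u + (dd W p u $ i) *\<^sub>R dd F p (0, axis i 1))) (at p)"
    by (rule has_derivative_transform_within_open[where g="\<lambda>q. dd F q (0, W q)", OF _ A pA])
      (simp_all only: dd_expand[OF Fd, symmetric])
  then show ?thesis by (simp add: add.commute)
qed

lemma pr_const:
  fixes F :: "('n::finite) tpt \<Rightarrow> 'b::real_normed_vector"
  assumes A: "open A" and pA: "p \<in> A" and Fd: "\<And>q. q \<in> A \<Longrightarrow> F differentiable at q"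
    and ad: "\<And>i. (\<lambda>q. dd F q (0, axis i 1)) differentiable at p"
  shows "dd (\<lambda>q. dd F q (0, w)) p u = (\<Sum>i\<in>UNIV. (w $ i) *\<^sub>R dd (\<lambda>q. dd F q (0, axis i 1)) p u)"
proof -
  have "dd (\<lambda>_. w) p u = 0" using dd_eq[OF has_derivative_const] by metis
  then show ?thesis
    using dd_eq[OF pr_sum[OF A pA Fd ad, of "\<lambda>_. w"]] by simp
qed

lemma pr_scale:
  fixes F :: "('n::finite) tpt \<Rightarrow> 'b::real_normed_vector"
  assumes A: "open A" and pA: "p \<in> A" and Fd: "\<And>q. q \<in> A \<Longrightarrow> F differentiable at q"
    and ad: "\<And>i. (\<lambda>q. dd F q (0, axis i 1)) differentiable at p"
  shows "dd (\<lambda>q. dd F q (0, c *\<^sub>R w)) p u = c *\<^sub>R dd (\<lambda>q. dd F q (0, w)) p u"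
proof -
  have 1: "dd (\<lambda>q. dd F q (0, c *\<^sub>R w)) p u = (\<Sum>i\<in>UNIV. ((c *\<^sub>R w) $ i) *\<^sub>R dd (\<lambda>q. dd F q (0, axis i 1)) p u)"
    by (rule pr_const[OF A pA Fd ad])
  have 2: "dd (\<lambda>q. dd F q (0, w)) p u = (\<Sum>i\<in>UNIV. (w $ i) *\<^sub>R dd (\<lambda>q. dd F q (0, axis i 1)) p u)"
    by (rule pr_const[OF A pA Fd ad])
  show ?thesis unfolding 1 2 by (simp add: scaleR_sum_right)
qed

lemma pr:
  fixes F :: "('n::finite) tpt \<Rightarrow> 'b::real_normed_vector" and W :: "'n tpt \<Rightarrow> real^'n"
  assumes A: "open A" and pA: "p \<in> A" and Fd: "\<And>q. q \<in> A \<Longrightarrow> F differentiable at q"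
    and ad: "\<And>i. (\<lambda>q. dd F q (0, axis i 1)) differentiable at p"
    and Wd: "W differentiable at p"
  shows "dd (\<lambda>q. dd F q (0, W q)) p u = dd F p (0, dd W p u) + dd (\<lambda>q. dd F q (0, W p)) p u"
    and "(\<lambda>q. dd F q (0, W q)) differentiable at p"
proof -
  show "dd (\<lambda>q. dd F q (0, W q)) p u = dd F p (0, dd W p u) + dd (\<lambda>q. dd F q (0, W p)) p u"
  proof -
    have 1: "dd (\<lambda>q. dd F q (0, W q)) p u = (\<Sum>i\<in>UNIV. (dd W p u $ i) *\<^sub>R dd F p (0, axis i 1) + (W p $ i) *\<^sub>R dd (\<lambda>q. dd F q (0, axis i 1)) p u)"
      by (rule dd_eq[OF pr_sum[OF A pA Fd ad Wd]])
    have 2: "dd F p (0, dd W p u) = (\<Sum>i\<in>UNIV. (dd W p u $ i) *\<^sub>R dd F p (0, axis i 1))"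
      by (rule dd_expand[OF Fd[OF pA]])
    have 3: "dd (\<lambda>q. dd F q (0, W p)) p u = (\<Sum>i\<in>UNIV. (W p $ i) *\<^sub>R dd (\<lambda>q. dd F q (0, axis i 1)) p u)"
      by (rule pr_const[OF A pA Fd ad])
    show ?thesis unfolding 1 2 3 by (rule sum.distrib)
  qed
  show "(\<lambda>q. dd F q (0, W q)) differentiable at p"
    using pr_sum[OF A pA Fd ad Wd] unfolding differentiable_def by blast
qed

lemma euler1:
  fixes P :: "('n::finite) tpt \<Rightarrow> real"
  assumes hom: "\<And>t. t > 0 \<Longrightarrow> P (x, t *\<^sub>R y) = t * P (x, y)"
    and d: "P differentiable at (x, y)"
  shows "dd P (x, y) (0, y) = P (x, y)"
proof -
  have e: "(x, 0) + t *\<^sub>R (0, y) = (x, t *\<^sub>R y)" for t by simp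
  have "((\<lambda>s. P ((x, 0) + s *\<^sub>R (0, y))) has_real_derivative dd P (x, y) (0, y)) (at 1)"
    using line_deriv[of P "(x,0)" 1 "(0,y)"] d by simp
  then have d1: "((\<lambda>s. P (x, s *\<^sub>R y)) has_real_derivative dd P (x, y) (0, y)) (at 1)"
    by (simp only: e)
  have d2: "((\<lambda>s. s * P (x, y)) has_real_derivative P (x, y)) (at 1)"
    by (auto intro!: derivative_eq_intros)
  have "((\<lambda>s. P (x, s *\<^sub>R y)) has_real_derivative P (x, y)) (at 1)"
    by (rule has_field_derivative_transform_within_open[OF d2, of "{0<..}"]) (auto simp: hom)
  then show ?thesis using d1 DERIV_unique by blast
qed



lemma dd_scaleR_fun:
  assumes "f differentiable at p"
  shows "dd (\<lambda>q. c *\<^sub>R f q) p v = c *\<^sub>R dd f p v"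
  using dd_eq[OF has_derivative_scaleR_right[OF dd_hd[OF assms]]] by simp

lemma dd_lin_fun:
  assumes "bounded_linear L"
  shows "dd L p v = L v" "L differentiable at p"
  using dd_eq[OF bounded_linear_imp_has_derivative[OF assms]] apply simp
  using bounded_linear_imp_has_derivative[OF assms] unfolding differentiable_def by blast

lemma dd_diff_fun:
  fixes f g :: "'a::real_normed_vector \<Rightarrow> real"
  assumes "f differentiable at p" "g differentiable at p"
  shows "dd (\<lambda>q. f q - c * g q) p v = dd f p v - c * dd g p v"
  using dd_eq[OF has_derivative_diff[OF dd_hd[OF assms(1)] has_derivative_mult_right[OF dd_hd[OF assms(2)]]]] by simp

lemma open_slit: "open U \<Longrightarrow> open (slit U)"
proof -
  assume "open U"
  have "slit U = U \<times> (UNIV - {0})" unfolding slit_def by auto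
  then show ?thesis using \<open>open U\<close> by (simp add: open_Times open_Diff)
qed

lemma liouville_hd: "(liouville has_derivative (\<lambda>v. (0, snd v))) (at q)"
  unfolding liouville_def[abs_def] by (auto intro!: derivative_eq_intros)


lemma dd0_add: "f differentiable at p \<Longrightarrow> dd f p (0, u + v) = dd f p (0, u) + dd f p (0, v)"
proof -
  assume d: "f differentiable at p"
  have "(0, u + v) = (0, u) + ((0, v) :: 'a::real_normed_vector \<times> 'b::real_normed_vector)" by simp
  then show ?thesis using dd_add[OF d] by metis
qed

lemma dd0_scale: "f differentiable at p \<Longrightarrow> dd f p (0, c *\<^sub>R u) = c *\<^sub>R dd f p (0, u)"
proof -
  assume d: "f differentiable at p"
  have "(0, c *\<^sub>R u) = c *\<^sub>R ((0, u) :: 'a::real_normed_vector \<times> 'b::real_normed_vector)" by simp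
  then show ?thesis using dd_scale[OF d] by metis
qed

lemma dd_Sdiff: "f differentiable at p \<Longrightarrow> dd f p (a - c *\<^sub>R b) = dd f p a - c *\<^sub>R dd f p b"
  using dd_diff dd_scale by metis

lemma hd_term:
  fixes f :: "'a::real_normed_vector \<Rightarrow> real"
  assumes "f differentiable at p" "(W has_derivative W') (at p)"
  shows "((\<lambda>q. (c * f q) *\<^sub>R W q) has_derivative (\<lambda>h. (c * f p) *\<^sub>R W' h + (c * dd f p h) *\<^sub>R W p)) (at p)"
  using has_derivative_scaleR[OF has_derivative_mult_right[OF dd_hd[OF assms(1)]] assms(2)] by simp

lemma vec_times2: "(v::real^'n) * 2 = (2::real) *\<^sub>R v"
  by (simp add: vec_eq_iff)

theorem lemma3p1:
  fixes U :: "(real^('n::finite)) set" and F P :: "'n tpt \<Rightarrow> real"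
    and S :: "'n tpt \<Rightarrow> 'n tpt" and lam :: real
  assumes "open U"
    and "is_finsler U F"
    and "geodesic_spray U F S"
    and "smooth_on (slit U) P"
    and "pos_hom1 U P"
    and "holonomy_invariant U S P"
  shows "\<forall>p\<in>slit U. \<forall>X.
     hproj (\<lambda>q. S q - (2 * lam * P q) *\<^sub>R liouville q) p X
       = hproj S p X - lam *\<^sub>R (P p *\<^sub>R Jv X + dJ P p X *\<^sub>R liouville p)
   \<and> vproj (\<lambda>q. S q - (2 * lam * P q) *\<^sub>R liouville q) p X
       = vproj S p X + lam *\<^sub>R (P p *\<^sub>R Jv X + dJ P p X *\<^sub>R liouville p)
   \<and> jacobi (\<lambda>q. S q - (2 * lam * P q) *\<^sub>R liouville q) p X
       = jacobi S p X + lam\<^sup>2 *\<^sub>R ((P p)\<^sup>2 *\<^sub>R Jv X - (P p * dJ P p X) *\<^sub>R liouville p)"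
proof (intro ballI allI)
  fix p :: "'n tpt" and X :: "'n tpt"
  assume pS: "p \<in> slit U"
  obtain x y where p: "p = (x, y)" by (cases p)
  obtain xi eta where X: "X = (xi, eta)" by (cases X)
  define A where "A = slit U"
  have A: "open A" unfolding A_def using open_slit[OF assms(1)] .
  have pA: "p \<in> A" using pS A_def by simp
  have smS: "smooth_on A S" and J: "\<And>q. q \<in> A \<Longrightarrow> Jv (S q) = liouville q"
    and LB: "\<And>q. q \<in> A \<Longrightarrow> lie_bracket liouville S q = S q"
    using assms(3) unfolding geodesic_spray_def is_spray_def A_def by auto
  have smP: "smooth_on A P" using assms(4) A_def by simp
  have hol: "\<And>q X. q \<in> A \<Longrightarrow> dd P q (hproj S q X) = 0"
    using assms(6) unfolding holonomy_invariant_def dh_def A_def by auto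
  define G where "G = sprayG S"
  have Gdef: "G q = (- (1/2)) *\<^sub>R snd (S q)" for q unfolding G_def sprayG_def by simp
  have bl: "bounded_linear (\<lambda>z::'n tpt. (- (1/2::real)) *\<^sub>R snd z)"
    by (intro bounded_linear_compose[OF bounded_linear_scaleR_right bounded_linear_snd])
  have smG: "smooth_on A G" unfolding G_def sprayG_def using smooth_lin[OF A bl smS] by simp
  have Sd: "\<And>q. q \<in> A \<Longrightarrow> S differentiable at q" by (rule smooth_diff[OF A smS])
  have Gd: "\<And>q. q \<in> A \<Longrightarrow> G differentiable at q" by (rule smooth_diff[OF A smG])
  have Pd: "\<And>q. q \<in> A \<Longrightarrow> P differentiable at q" by (rule smooth_diff[OF A smP])
  have GDd: "\<And>w. (\<lambda>q. dd G q w) differentiable at p" by (rule smooth_diff[OF A smooth_dd[OF smG] pA])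
  have PDd: "\<And>w. (\<lambda>q. dd P q w) differentiable at p" by (rule smooth_diff[OF A smooth_dd[OF smP] pA])
  have dG: "\<And>q v. q \<in> A \<Longrightarrow> dd G q v = (- (1/2)) *\<^sub>R snd (dd S q v)"
  proof -
    fix q v assume "q \<in> A"
    show "dd G q v = (- (1/2)) *\<^sub>R snd (dd S q v)"
      unfolding G_def sprayG_def
      using dd_eq[OF bounded_linear.has_derivative[OF bl dd_hd[OF Sd[OF \<open>q \<in> A\<close>]]]] by simp
  qed
  have fstS: "\<And>q. q \<in> A \<Longrightarrow> fst (S q) = snd q"
    using J unfolding Jv_def liouville_def by (metis prod.inject)
  have eulerG: "\<And>q. q \<in> A \<Longrightarrow> dd G q (0, snd q) = 2 *\<^sub>R G q"
  proof -
    fix q assume qA: "q \<in> A"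
    have "dd S q (liouville q) - dd liouville q (S q) = S q"
      using LB[OF qA] unfolding lie_bracket_def .
    then have "dd S q (0, snd q) = S q + (0, snd (S q))"
      using dd_eq[OF liouville_hd] unfolding liouville_def by (simp add: algebra_simps)
    then show "dd G q (0, snd q) = 2 *\<^sub>R G q" using dG[OF qA] Gdef by simp
  qed
  have snd_d: "dd snd q v = snd v" "snd differentiable at q" for q :: "'n tpt" and v
    by (rule dd_lin_fun[OF bounded_linear_snd])+
  have py: "snd p = y" using p by simp
  have F6': "dd (\<lambda>q. dd G q (0, y)) p (0, xi) = dd G p (0, xi)" for xi
  proof -
    have "dd (\<lambda>q. dd G q (0, snd q)) p (0, xi) = dd G p (0, dd snd p (0, xi)) + dd (\<lambda>q. dd G q (0, snd p)) p (0, xi)"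
      by (rule pr(1)[OF A pA Gd GDd snd_d(2)])
    moreover have "dd (\<lambda>q. dd G q (0, snd q)) p (0, xi) = dd (\<lambda>q. 2 *\<^sub>R G q) p (0, xi)"
      by (rule dd_cong[OF A pA]) (rule eulerG)
    moreover have "dd (\<lambda>q. 2 *\<^sub>R G q) p (0, xi) = 2 *\<^sub>R dd G p (0, xi)"
      by (rule dd_scaleR_fun[OF Gd[OF pA]])
    ultimately show ?thesis using snd_d(1) py by (simp add: scaleR_2)
  qed
  have F6: "dd (\<lambda>q. dd G q (0, xi)) p (0, y) = dd G p (0, xi)" for xi
    using sym_vec[OF A pA smG, of "(0, xi)" "(0, y)"] F6' by simp
  have eulerP: "\<And>q. q \<in> A \<Longrightarrow> dd P q (0, snd q) = P q"
  proof -
    fix q assume qA: "q \<in> A"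
    obtain x' y' where q: "q = (x', y')" by (cases q)
    have "x' \<in> U" "y' \<noteq> 0" using qA q unfolding A_def slit_def by auto
    then have "\<And>t. t > 0 \<Longrightarrow> P (x', t *\<^sub>R y') = t * P (x', y')"
      using assms(5) unfolding pos_hom1_def by blast
    then show "dd P q (0, snd q) = P q" using euler1[of P x' y'] Pd[OF qA] q by simp
  qed
  have F7: "dd (\<lambda>q. dd P q (0, xi)) p (0, y) = 0" for xi
  proof -
    have "dd (\<lambda>q. dd P q (0, snd q)) p (0, xi) = dd P p (0, dd snd p (0, xi)) + dd (\<lambda>q. dd P q (0, snd p)) p (0, xi)"
      by (rule pr(1)[OF A pA Pd PDd snd_d(2)])
    moreover have "dd (\<lambda>q. dd P q (0, snd q)) p (0, xi) = dd P p (0, xi)"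
      by (rule dd_cong[OF A pA]) (rule eulerP)
    moreover have "dd (\<lambda>q. dd P q (0, xi)) p (0, y) = dd (\<lambda>q. dd P q (0, y)) p (0, xi)"
      by (rule sym_real[OF A pA smP])
    ultimately show ?thesis using snd_d(1) py by simp
  qed
  have holo: "\<And>q w. q \<in> A \<Longrightarrow> dd P q (w, 0) = dd P q (0, dd G q (0, w))"
  proof -
    fix q w assume qA: "q \<in> A"
    have "hproj S q (w, 0) = (w, 0) - (0, dd G q (0, w))"
      unfolding hproj_def GJ_def G_def by simp
    then have "dd P q ((w, 0) - (0, dd G q (0, w))) = 0" using hol[OF qA, of "(w, 0)"] by metis
    then show "dd P q (w, 0) = dd P q (0, dd G q (0, w))" unfolding dd_diff[OF Pd[OF qA]] by simp
  qed
  have Sp: "S p = (y, 0) + (-2) *\<^sub>R (0, G p)"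
    using fstS[OF pA] Gdef[of p] py by (simp add: prod_eq_iff)
  have ePy: "dd P p (0, y) = P p" using eulerP[OF pA] py by simp
  have eGy: "dd G p (0, y) = 2 *\<^sub>R G p" using eulerG[OF pA] py by simp
  have F5: "dd P p (S p) = 0"
  proof -
    have "dd P p (S p) = dd P p (y, 0) + (-2) * dd P p (0, G p)"
      unfolding Sp dd_add[OF Pd[OF pA]] dd_scale[OF Pd[OF pA]] by simp
    also have "dd P p (y, 0) = dd P p ((2::real) *\<^sub>R (0, G p))"
      using holo[OF pA, of y] eGy by simp
    also have "\<dots> = 2 * dd P p (0, G p)" unfolding dd_scale[OF Pd[OF pA]] by simp
    finally show ?thesis by simp
  qed
  have F8: "dd (\<lambda>q. dd P q (0, xi)) p (S p) = dd P p (xi, 0)" for xi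
  proof -
    have "dd (\<lambda>q. dd P q (0, xi)) p (S p) = dd (\<lambda>q. dd P q (S p)) p (0, xi)"
      by (rule sym_real[OF A pA smP])
    also have "\<dots> = dd (\<lambda>q. dd P q (0, dd G q (0, y)) - 2 * dd P q (0, G p)) p (0, xi)"
    proof (rule dd_cong[OF A pA])
      fix q assume qA: "q \<in> A"
      show "dd P q (S p) = dd P q (0, dd G q (0, y)) - 2 * dd P q (0, G p)"
        unfolding Sp dd_add[OF Pd[OF qA]] dd_scale[OF Pd[OF qA]] holo[OF qA, of y] by simp
    qed
    also have "\<dots> = dd (\<lambda>q. dd P q (0, dd G q (0, y))) p (0, xi) - 2 * dd (\<lambda>q. dd P q (0, G p)) p (0, xi)"
      by (rule dd_diff_fun[OF pr(2)[OF A pA Pd PDd GDd] PDd])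
    also have "dd (\<lambda>q. dd P q (0, dd G q (0, y))) p (0, xi)
        = dd P p (0, dd (\<lambda>q. dd G q (0, y)) p (0, xi)) + dd (\<lambda>q. dd P q (0, dd G p (0, y))) p (0, xi)"
      by (rule pr(1)[OF A pA Pd PDd GDd])
    also have "dd (\<lambda>q. dd P q (0, dd G p (0, y))) p (0, xi) = 2 * dd (\<lambda>q. dd P q (0, G p)) p (0, xi)"
      unfolding eGy using pr_scale[OF A pA Pd PDd] by simp
    finally show ?thesis using F6' holo[OF pA, of xi] by simp
  qed
  define St where "St = (\<lambda>q. S q - (2 * lam * P q) *\<^sub>R liouville q)"
  have GtE: "sprayG St = (\<lambda>q. G q + (lam * P q) *\<^sub>R snd q)"
    unfolding St_def sprayG_def G_def liouville_def by (rule ext) (simp add: algebra_simps)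
  have hGt: "((\<lambda>q. G q + (lam * P q) *\<^sub>R snd q) has_derivative
      (\<lambda>v. dd G q v + ((lam * P q) *\<^sub>R snd v + (lam * dd P q v) *\<^sub>R snd q))) (at q)" if qA: "q \<in> A" for q
    by (rule has_derivative_add[OF dd_hd[OF Gd[OF qA]] hd_term[OF Pd[OF qA] has_derivative_snd[OF has_derivative_ident]]])
  have NtE: "GJ St q w = dd G q (0, w) + (lam * P q) *\<^sub>R w + (lam * dd P q (0, w)) *\<^sub>R snd q" if qA: "q \<in> A" for q w
    unfolding GJ_def GtE dd_eq[OF hGt[OF qA]] by (simp add: algebra_simps)
  have dJ: "dJ P p X = dd P p (0, xi)" unfolding dJ_def Jv_def X by simp
  have hpart: "hproj St p X = hproj S p X - lam *\<^sub>R (P p *\<^sub>R Jv X + dJ P p X *\<^sub>R liouville p)"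
    unfolding hproj_def NtE[OF pA] dJ unfolding GJ_def G_def[symmetric] X Jv_def liouville_def p
    by (simp add: algebra_simps)
  have vpart: "vproj St p X = vproj S p X + lam *\<^sub>R (P p *\<^sub>R Jv X + dJ P p X *\<^sub>R liouville p)"
    unfolding vproj_def NtE[OF pA] dJ unfolding GJ_def G_def[symmetric] X Jv_def liouville_def p
    by (simp add: algebra_simps)
  define c where "c = 2 * lam * P p"
  have Stp: "St p = S p - c *\<^sub>R (0, y)" unfolding St_def c_def liouville_def p by simp
  have T1: "dd (sprayG St) p (xi, 0) = dd G p (xi, 0) + (lam * dd P p (xi, 0)) *\<^sub>R y"
    unfolding GtE dd_eq[OF hGt[OF pA]] using py by simp
  have hE: "((\<lambda>q. dd G q (0, xi) + (lam * P q) *\<^sub>R (\<lambda>_. xi) q + (lam * dd P q (0, xi)) *\<^sub>R snd q) has_derivative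
     (\<lambda>v. dd (\<lambda>q. dd G q (0, xi)) p v + ((lam * P p) *\<^sub>R 0 + (lam * dd P p v) *\<^sub>R xi)
        + ((lam * dd P p (0, xi)) *\<^sub>R snd v + (lam * dd (\<lambda>q. dd P q (0, xi)) p v) *\<^sub>R snd p))) (at p)"
    by (rule has_derivative_add[OF has_derivative_add[OF dd_hd[OF GDd] hd_term[OF Pd[OF pA] has_derivative_const]]
          hd_term[OF PDd has_derivative_snd[OF has_derivative_ident]]])
  have T2: "dd (\<lambda>q. GJ St q xi) p (St p) = dd (\<lambda>q. dd G q (0, xi)) p (St p) + (lam * dd P p (St p)) *\<^sub>R xi
        + (lam * dd P p (0, xi)) *\<^sub>R snd (St p) + (lam * dd (\<lambda>q. dd P q (0, xi)) p (St p)) *\<^sub>R y"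
  proof -
    have "dd (\<lambda>q. GJ St q xi) p (St p) = dd (\<lambda>q. dd G q (0, xi) + (lam * P q) *\<^sub>R (\<lambda>_. xi) q + (lam * dd P q (0, xi)) *\<^sub>R snd q) p (St p)"
      by (rule dd_cong[OF A pA]) (simp add: NtE)
    then show ?thesis unfolding dd_eq[OF hE] using py by (simp add: algebra_simps)
  qed
  have V1: "dd (\<lambda>q. dd G q (0, xi)) p (St p) = dd (\<lambda>q. dd G q (0, xi)) p (S p) - c *\<^sub>R dd G p (0, xi)"
    unfolding Stp dd_Sdiff[OF GDd] F6 ..
  have V2: "dd P p (St p) = - c * P p"
    unfolding Stp dd_Sdiff[OF Pd[OF pA]] F5 ePy by simp
  have V3: "snd (St p) = (-2) *\<^sub>R G p - c *\<^sub>R y"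
    unfolding Stp using Sp by simp
  have V4: "dd (\<lambda>q. dd P q (0, xi)) p (St p) = dd P p (xi, 0)"
    unfolding Stp dd_Sdiff[OF PDd] F7 F8 by simp
  have NtP: "GJ St p w = dd G p (0, w) + (lam * P p) *\<^sub>R w + (lam * dd P p (0, w)) *\<^sub>R y" for w
    using NtE[OF pA] py by simp
  define Nx where "Nx = dd G p (0, xi)"
  define ax where "ax = dd P p (0, xi)"
  have T3: "GJ St p (GJ St p xi) = dd G p (0, Nx) + (lam * P p) *\<^sub>R Nx + (lam * ax) *\<^sub>R (2 *\<^sub>R G p)
     + (lam * P p) *\<^sub>R (Nx + (lam * P p) *\<^sub>R xi + (lam * ax) *\<^sub>R y)
     + (lam * (dd P p (xi, 0) + lam * P p * ax + lam * ax * P p)) *\<^sub>R y"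
    unfolding NtP Nx_def[symmetric] ax_def[symmetric]
    unfolding dd0_add[OF Gd[OF pA]] dd0_scale[OF Gd[OF pA]] dd0_add[OF Pd[OF pA]] dd0_scale[OF Pd[OF pA]]
    unfolding eGy ePy Nx_def ax_def holo[OF pA, symmetric] by simp
  have JS: "jacobiR S p xi = 2 *\<^sub>R dd G p (xi, 0) - dd (\<lambda>q. dd G q (0, xi)) p (S p) - dd G p (0, Nx)"
    unfolding jacobiR_def GJ_def G_def Nx_def ..
  have JSt: "jacobiR St p xi = 2 *\<^sub>R dd (sprayG St) p (xi, 0) - dd (\<lambda>q. GJ St q xi) p (St p) - GJ St p (GJ St p xi)"
    unfolding jacobiR_def ..
  have jR: "jacobiR St p xi = jacobiR S p xi + lam\<^sup>2 *\<^sub>R ((P p)\<^sup>2 *\<^sub>R xi - (P p * ax) *\<^sub>R y)"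
    unfolding JSt JS T1 T2 T3 V1 V2 V3 V4
    unfolding Nx_def[symmetric] ax_def[symmetric] c_def
    by (simp add: algebra_simps power2_eq_square vec_times2)
  have jpart: "jacobi St p X = jacobi S p X + lam\<^sup>2 *\<^sub>R ((P p)\<^sup>2 *\<^sub>R Jv X - (P p * dJ P p X) *\<^sub>R liouville p)"
    unfolding jacobi_def dJ X Jv_def liouville_def fst_conv jR ax_def[symmetric] using py by (simp add: ax_def dJ_def Jv_def)
  show "hproj (\<lambda>q. S q - (2 * lam * P q) *\<^sub>R liouville q) p X
       = hproj S p X - lam *\<^sub>R (P p *\<^sub>R Jv X + dJ P p X *\<^sub>R liouville p)
   \<and> vproj (\<lambda>q. S q - (2 * lam * P q) *\<^sub>R liouville q) p X
       = vproj S p X + lam *\<^sub>R (P p *\<^sub>R Jv X + dJ P p X *\<^sub>R liouville p)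
   \<and> jacobi (\<lambda>q. S q - (2 * lam * P q) *\<^sub>R liouville q) p X
       = jacobi S p X + lam\<^sup>2 *\<^sub>R ((P p)\<^sup>2 *\<^sub>R Jv X - (P p * dJ P p X) *\<^sub>R liouville p)"
    using hpart vpart jpart unfolding St_def by blast
qed

end
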